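(* For every positive integer $k$, as formal power series in $q$, $$\sum_{n\ge1}\mathrm{spt}k'_{do}(n)\,q^n=T_k(q)\,(q;q^2)_\infty+2q^k(q^2;q^2)_{k-1},$$ where $T_1(q)=-q$ and $T_k(q)=(q-q^{2k-1})T_{k-1}(q)-q^{2k-1}$ for $k>1$.
   Context: For a partition $\pi$, $s(\pi)$ is its smallest part. $\mathrm{Spt}k_{do}(n)$ is the set of partitions $\pi$ of $n$ in which $s(\pi)$ occurs exactly $k$ times and the remaining parts (those larger than $s(\pi)$) are pairwise distinct and each has parity different from that of $s(\pi)$. $B_0(k,n)$ (resp. $B_1(k,n)$) is the number of $\pi\in\mathrm{Spt}k_{do}(n)$ whose number of parts greater than $s(\pi)$ is even (resp. odd), and $\mathrm{spt}k'_{do}(n)=B_0(k,n)-B_1(k,n)$. Notation: $(a;q)_0=1$, $(a;q)_n=\prod_{j=0}^{n-1}(1-aq^j)$, $(a;q)_\infty=\prod_{j\ge0}(1-aq^j)$. *)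

theory Defs
  imports "HOL-Library.Multiset" "HOL-Computational_Algebra.Formal_Power_Series"
begin

definition smallest_part :: "nat multiset \<Rightarrow> nat" where
  "smallest_part p = Min (set_mset p)"

definition is_partition :: "nat \<Rightarrow> nat multiset \<Rightarrow> bool" where
  "is_partition n p \<longleftrightarrow> (\<forall>x\<in>#p. 0 < x) \<and> sum_mset p = n"

definition Spt_do :: "nat \<Rightarrow> nat \<Rightarrow> nat multiset set" where
  "Spt_do k n = {p. is_partition n p \<and> p \<noteq> {#} \<and>
      count p (smallest_part p) = k \<and>
      (\<forall>x\<in>#p. smallest_part p < x \<longrightarrow>
          count p x = 1 \<and> odd (x + smallest_part p))}"

definition num_larger :: "nat multiset \<Rightarrow> nat" where
  "num_larger p = size (filter_mset (\<lambda>x. smallest_part p < x) p)"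

definition B0 :: "nat \<Rightarrow> nat \<Rightarrow> nat" where
  "B0 k n = card {p \<in> Spt_do k n. even (num_larger p)}"

definition B1 :: "nat \<Rightarrow> nat \<Rightarrow> nat" where
  "B1 k n = card {p \<in> Spt_do k n. odd (num_larger p)}"

definition sptk'_do :: "nat \<Rightarrow> nat \<Rightarrow> int" where
  "sptk'_do k n = int (B0 k n) - int (B1 k n)"

text \<open>(q;q^2)_\<infinity> as a formal power series: the coefficient of q^n is taken from the
  finite product over j \<le> n, which already agrees with all longer partial products
  in degree n (all further factors are 1 + O(q^{n+1})).\<close>
definition qq2_inf :: "int fps" where
  "qq2_inf = Abs_fps (\<lambda>n. fps_nth (\<Prod>j<Suc n. (1 - fps_X ^ (2*j+1))) n)"

definition q2q2_fin :: "nat \<Rightarrow> int fps" where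
  "q2q2_fin m = (\<Prod>j<m. (1 - fps_X ^ (2*j+2)))"

fun T :: "nat \<Rightarrow> int fps" where
  "T 0 = 0"
| "T (Suc 0) = - fps_X"
| "T (Suc (Suc k)) = (fps_X - fps_X ^ (2*(k+2)-1)) * T (Suc k) - fps_X ^ (2*(k+2)-1)"

end

theory Submission
  imports Defs
begin

unbundle fps_syntax

definition JJ :: "nat \<Rightarrow> nat \<Rightarrow> nat set" where
  "JJ M s = {j. s < j \<and> j \<le> M \<and> odd (j + s)}"

definition PP :: "nat \<Rightarrow> nat \<Rightarrow> int fps" where
  "PP M s = (\<Prod>j\<in>JJ M s. (1 - fps_X ^ j))"

definition SS :: "nat \<Rightarrow> nat \<Rightarrow> nat \<Rightarrow> int fps" where
  "SS M k N = (\<Sum>s\<in>{1..N}. fps_X ^ (k*s) * PP M s)"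

definition tl' :: "nat \<Rightarrow> nat \<Rightarrow> nat \<Rightarrow> int fps" where
  "tl' M k N = fps_X^(k*(N+1)+1) * PP M (N+1) + fps_X^(k*(N+2)+1) * PP M (N+2)
     - fps_X^((k+1)*(N+1)) * PP M (N+1) - fps_X^((k+1)*(N+2)) * PP M (N+2)"

lemma JJ_finite[simp]: "finite (JJ M s)"
  unfolding JJ_def by (rule finite_subset[of _ "{..M}"]) auto

lemma JJ_step: "s + 1 \<le> M \<Longrightarrow> JJ M s = insert (s+1) (JJ M (s+2)) \<and> s + 1 \<notin> JJ M (s+2)"
  unfolding JJ_def by auto presburger+

lemma JJ_empty: "M \<le> s \<Longrightarrow> JJ M s = {}"
  unfolding JJ_def by auto

lemma PP_step: "s + 1 \<le> M \<Longrightarrow> PP M s = (1 - fps_X^(s+1)) * PP M (s+2)"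
  unfolding PP_def using JJ_step[of s M] by simp

lemma PP_empty: "M \<le> s \<Longrightarrow> PP M s = 1"
  unfolding PP_def using JJ_empty by simp

lemma key:
  assumes "N + 1 \<le> M"
  shows "SS M (k+1) N - (fps_X - fps_X^(2*k+1)) * SS M k N + fps_X^(2*k+1) * PP M 0 = tl' M k N"
  using assms
proof (induction N)
  case 0
  have h: "PP M 0 = (1 - fps_X) * PP M 2" using PP_step[of 0 M] 0 by (simp add: numeral_2_eq_2)
  show ?case unfolding SS_def tl'_def h
    by (simp add: algebra_simps power_add power_mult numeral_2_eq_2)
next
  case (Suc N)
  have IH: "SS M (k+1) N - (fps_X - fps_X^(2*k+1)) * SS M k N + fps_X^(2*k+1) * PP M 0 = tl' M k N"
    using Suc by simp
  have P: "PP M (N+1) = (1 - fps_X^(N+2)) * PP M (N+3)"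
    using PP_step[of "N+1" M] Suc.prems by (simp add: numeral_eq_Suc)
  have S1: "SS M j (Suc N) = SS M j N + fps_X^(j*(N+1)) * PP M (N+1)" for j
    unfolding SS_def by simp
  define u :: "int fps" where "u = fps_X^N"
  define v :: "int fps" where "v = fps_X^(k*N)"
  define y :: "int fps" where "y = fps_X^k"
  have t1: "tl' M k (Suc N) = fps_X*v*y^3*PP M (N+3) + fps_X*v*y^2 * PP M (N+2) - v*y^2*u*fps_X^2*PP M (N+2) - v*y^3*u*fps_X^3*PP M (N+3)"
    unfolding tl'_def u_def v_def y_def
    by (simp add: algebra_simps power_add power_mult power2_eq_square power3_eq_cube numeral_eq_Suc)
  have t0: "tl' M k N = v*y*fps_X*PP M (N+1) + v*y^2*fps_X * PP M (N+2) - v*y*u*fps_X*PP M (N+1) - v*y^2*u*fps_X^2*PP M (N+2)"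
    unfolding tl'_def u_def v_def y_def
    by (simp add: algebra_simps power_add power_mult power2_eq_square power3_eq_cube numeral_eq_Suc)
  have e: "fps_X^((k+1)*(N+1)) = v*y*u*fps_X" "fps_X^(k*(N+1)) = v*y" "fps_X^(2*k+1) = y^2*fps_X"
     "fps_X^(N+2) = u*fps_X^2"
    unfolding u_def v_def y_def
    by (simp_all add: algebra_simps power_add power_mult power2_eq_square power3_eq_cube numeral_eq_Suc)
  have "SS M (k+1) (Suc N) - (fps_X - fps_X^(2*k+1)) * SS M k (Suc N) + fps_X^(2*k+1) * PP M 0
      = tl' M k N + fps_X^((k+1)*(N+1)) * PP M (N+1) - (fps_X - fps_X^(2*k+1)) * (fps_X^(k*(N+1)) * PP M (N+1))"
    unfolding S1 IH[symmetric] by (simp add: algebra_simps)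
  also have "\<dots> = tl' M k (Suc N)"
    unfolding t0 t1 e P by (simp add: algebra_simps power2_eq_square power3_eq_cube)
  finally show ?case .
qed

lemma T_SS: "T (Suc (Suc k)) = (fps_X - fps_X^(2*Suc k+1)) * T (Suc k) - fps_X^(2*Suc k+1)"
proof -
  have "2*(Suc k+1)-1 = 2*Suc k+1" by simp
  then show ?thesis by (simp only: T.simps Suc_eq_plus1[symmetric] add_2_eq_Suc')
qed

lemma q2_Suc: "q2q2_fin (Suc k) = q2q2_fin k * (1 - fps_X^(2*k+2))"
  by (simp add: q2q2_fin_def)

lemma alg: "\<exists>h. SS (N+1) (Suc k) N = T (Suc k) * PP (N+1) 0 + 2 * fps_X^(Suc k) * q2q2_fin k + fps_X^(N+1) * h"
proof (induction k)
  case 0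
  have k: "SS (N+1) 1 N + fps_X * PP (N+1) 0 = tl' (N+1) 0 N"
    using key[of N "N+1" 0] by simp
  have t: "tl' (N+1) 0 N = 2 * fps_X + fps_X^(N+1) * (-1 - fps_X)"
    unfolding tl'_def by (simp add: PP_empty algebra_simps)
  have "SS (N+1) 1 N = T 1 * PP (N+1) 0 + 2 * fps_X^1 * q2q2_fin 0 + fps_X^(N+1) * (-1 - fps_X)"
  proof -
    have "SS (N+1) 1 N = tl' (N+1) 0 N - fps_X * PP (N+1) 0" using k by (simp add: algebra_simps)
    then show ?thesis unfolding t by (simp add: q2q2_fin_def algebra_simps)
  qed
  then show ?case by auto
next
  case (Suc k)
  then obtain h where h: "SS (N+1) (Suc k) N = T (Suc k) * PP (N+1) 0 + 2 * fps_X^(Suc k) * q2q2_fin k + fps_X^(N+1) * h"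
    by blast
  have k: "SS (N+1) (Suc (Suc k)) N = (fps_X - fps_X^(2*Suc k+1)) * SS (N+1) (Suc k) N - fps_X^(2*Suc k+1) * PP (N+1) 0 + tl' (N+1) (Suc k) N"
    using key[of N "N+1" "Suc k"] by (simp add: algebra_simps)
  define h2 :: "int fps" where "h2 = fps_X^(k*(N+1)+1) + fps_X^(k*(N+1)+k+2) - fps_X^((k+1)*(N+1)) - fps_X^((k+1)*(N+1)+k+2)"
  have p1: "fps_X^(Suc k*(N+1)+1) = fps_X^(N+1) * (fps_X^(k*(N+1)+1) :: int fps)"
    by (simp add: power_add[symmetric] algebra_simps)
  have p2: "fps_X^(Suc k*(N+2)+1) = fps_X^(N+1) * (fps_X^(k*(N+1)+k+2) :: int fps)"
    by (simp add: power_add[symmetric] algebra_simps)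
  have p3: "fps_X^((Suc k + 1)*(N+1)) = fps_X^(N+1) * (fps_X^((k+1)*(N+1)) :: int fps)"
    by (simp add: power_add[symmetric] algebra_simps)
  have p4: "fps_X^((Suc k + 1)*(N+2)) = fps_X^(N+1) * (fps_X^((k+1)*(N+1)+k+2) :: int fps)"
    by (simp add: power_add[symmetric] algebra_simps)
  have e1: "PP (N+1) (N+1) = 1" and e2: "PP (N+1) (N+2) = 1" by (simp_all add: PP_empty)
  have t: "tl' (N+1) (Suc k) N = fps_X^(N+1) * h2"
    unfolding tl'_def h2_def e1 e2
    unfolding p1 p2 p3 p4 by (simp add: algebra_simps)
  have "SS (N+1) (Suc (Suc k)) N = T (Suc (Suc k)) * PP (N+1) 0 + 2 * fps_X^(Suc (Suc k)) * q2q2_fin (Suc k)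
      + fps_X^(N+1) * ((fps_X - fps_X^(2*Suc k+1)) * h + h2)"
    unfolding k h t T_SS q2_Suc by (simp add: algebra_simps power_add)
  then show ?case by blast
qed

lemma trunc:
  assumes "finite C" "\<forall>j\<in>C. i < j" "m \<le> i"
  shows "(f * (\<Prod>j\<in>C. (1 - fps_X^j :: int fps))) $ m = f $ m"
  using assms
proof (induction C rule: finite_induct)
  case empty
  then show ?case by simp
next
  case (insert c C)
  have "f * (\<Prod>j\<in>insert c C. (1 - fps_X^j :: int fps)) = f * (\<Prod>j\<in>C. (1 - fps_X^j)) - fps_X^c * (f * (\<Prod>j\<in>C. (1 - fps_X^j)))"
    using insert by (simp add: algebra_simps)
  moreover have "m < c" using insert by auto
  ultimately show ?case using insert by (simp add: fps_X_power_mult_nth)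
qed

lemma trunc2:
  assumes "finite B" "A \<subseteq> B" "\<forall>j\<in>B-A. i < j"
  shows "(\<Prod>j\<in>B. (1 - fps_X^j :: int fps)) $ i = (\<Prod>j\<in>A. (1 - fps_X^j :: int fps)) $ i"
proof -
  have "(\<Prod>j\<in>B. (1 - fps_X^j :: int fps)) = (\<Prod>j\<in>A. (1 - fps_X^j)) * (\<Prod>j\<in>B-A. (1 - fps_X^j))"
    using prod.subset_diff[OF assms(2) assms(1)] by (simp add: mult.commute)
  then show ?thesis using trunc[of "B-A" i i] assms by simp
qed

lemma qq2_coeff:
  assumes "i \<le> N"
  shows "qq2_inf $ i = PP (N+1) 0 $ i"
proof -
  define C where "C = {j. j \<le> i \<and> odd j}"
  have fC: "finite C" unfolding C_def by (rule finite_subset[of _ "{..i}"]) auto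
  have "(\<Prod>j<Suc i. (1 - fps_X ^ (2*j+1) :: int fps)) = (\<Prod>j\<in>(\<lambda>j. 2*j+1) ` {..<Suc i}. (1 - fps_X ^ j))"
    by (subst prod.reindex) (auto simp: inj_on_def)
  also have "\<dots> $ i = (\<Prod>j\<in>C. (1 - fps_X ^ j :: int fps)) $ i"
  proof (rule trunc2)
    show "C \<subseteq> (\<lambda>j. 2*j+1) ` {..<Suc i}"
    proof
      fix j assume "j \<in> C"
      then have "j = 2*(j div 2)+1" "j div 2 < Suc i" unfolding C_def by auto
      then show "j \<in> (\<lambda>j. 2*j+1) ` {..<Suc i}" by blast
    qed
  qed (auto simp: C_def)
  finally have 1: "qq2_inf $ i = (\<Prod>j\<in>C. (1 - fps_X ^ j :: int fps)) $ i"
    unfolding qq2_inf_def by simp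
  have 2: "PP (N+1) 0 $ i = (\<Prod>j\<in>C. (1 - fps_X ^ j :: int fps)) $ i"
    unfolding PP_def by (rule trunc2) (use assms in \<open>auto simp: C_def JJ_def odd_pos\<close>)
  show ?thesis using 1 2 by simp
qed

lemma coeff_link: "(f * qq2_inf) $ n = (f * PP (n+1) 0) $ n"
  unfolding fps_mult_nth
proof (rule sum.cong)
  fix x assume "x \<in> {0..n}"
  then show "f $ x * qq2_inf $ (n - x) = f $ x * PP (n + 1) 0 $ (n - x)"
    using qq2_coeff[of "n - x" n] by simp
qed simp

lemma m1: "(-1::int fps) = fps_const (-1)" by (simp only: fps_const_neg[symmetric] fps_const_1_eq_1)

lemma neg1_pow_fps: "((-1::int fps) ^ c) = fps_const ((-1) ^ c)"
  by (subst m1) (rule fps_const_power)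

lemma prodcoef:
  assumes "finite J"
  shows "(\<Prod>j\<in>J. (1 - fps_X^j :: int fps)) $ m = (\<Sum>A\<in>{A. A \<subseteq> J \<and> \<Sum>A = m}. (-1)^card A)"
proof -
  have "(\<Prod>j\<in>J. (1 - fps_X^j :: int fps)) = (\<Sum>A\<in>Pow J. (-1) ^ card A * (\<Prod>j\<in>A. fps_X^j) * (\<Prod>j\<in>J-A. 1))"
    by (rule prod_diff_conv_sum[OF assms])
  also have "\<dots> = (\<Sum>A\<in>Pow J. fps_X^(\<Sum>A) * fps_const ((-1) ^ card A))"
    by (rule sum.cong) (simp_all only: neg1_pow_fps power_sum prod.neutral_const mult_1_right mult_1_left mult.commute)
  finally have "(\<Prod>j\<in>J. (1 - fps_X^j :: int fps)) $ m = (\<Sum>A\<in>Pow J. (fps_X^(\<Sum>A) * fps_const ((-1) ^ card A)) $ m)"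
    by (simp add: fps_sum_nth)
  also have "\<dots> = (\<Sum>A\<in>Pow J. if \<Sum>A = m then (-1) ^ card A else 0)"
    by (rule sum.cong) (auto simp: fps_X_power_mult_nth)
  also have "\<dots> = (\<Sum>A\<in>{A\<in>Pow J. \<Sum>A = m}. (-1)^card A)"
    by (rule sum.inter_filter[symmetric]) (simp add: assms)
  also have "{A\<in>Pow J. \<Sum>A = m} = {A. A \<subseteq> J \<and> \<Sum>A = m}" by auto
  finally show ?thesis .
qed

definition DD :: "nat \<Rightarrow> nat \<Rightarrow> (nat \<times> nat set) set" where
  "DD k n = Sigma {1..n} (\<lambda>s. {A. A \<subseteq> JJ (n+1) s \<and> k*s + \<Sum>A = n})"

lemma DD_finite: "finite (DD k n)"
  unfolding DD_def
  by (rule finite_SigmaI) (auto intro: finite_subset[of _ "Pow (JJ (n+1) _)"])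

lemma SS_coef: "SS (n+1) k n $ n = (\<Sum>d\<in>DD k n. (-1::int) ^ card (snd d))"
proof -
  have "SS (n+1) k n $ n = (\<Sum>s\<in>{1..n}. (fps_X^(k*s) * PP (n+1) s) $ n)"
    unfolding SS_def by (simp add: fps_sum_nth)
  also have "\<dots> = (\<Sum>s\<in>{1..n}. \<Sum>A\<in>{A. A \<subseteq> JJ (n+1) s \<and> k*s + \<Sum>A = n}. (-1::int) ^ card A)"
  proof (rule sum.cong)
    fix s assume "s \<in> {1..n}"
    show "(fps_X^(k*s) * PP (n+1) s) $ n = (\<Sum>A\<in>{A. A \<subseteq> JJ (n+1) s \<and> k*s + \<Sum>A = n}. (-1::int) ^ card A)"
    proof (cases "n < k*s")
      case True
      then have "{A. A \<subseteq> JJ (n+1) s \<and> k*s + \<Sum>A = n} = {}" by auto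
      then show ?thesis using True by (simp add: fps_X_power_mult_nth)
    next
      case False
      then have "{A. A \<subseteq> JJ (n+1) s \<and> k*s + \<Sum>A = n} = {A. A \<subseteq> JJ (n+1) s \<and> \<Sum>A = n - k*s}" by auto
      then show ?thesis using False by (simp add: fps_X_power_mult_nth PP_def prodcoef)
    qed
  qed simp
  also have "\<dots> = (\<Sum>(s,A)\<in>DD k n. (-1::int) ^ card A)"
    unfolding DD_def
    by (rule sum.Sigma) (auto intro: finite_subset[of _ "Pow (JJ (n+1) _)"])
  finally show ?thesis by (simp add: case_prod_beta)
qed

definition gg :: "nat \<Rightarrow> nat \<times> nat set \<Rightarrow> nat multiset" where
  "gg k d = replicate_mset k (fst d) + mset_set (snd d)"

lemma mset_le_sum: "(x::nat) \<in># p \<Longrightarrow> x \<le> sum_mset p"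
  by (metis le_add1 multi_member_split sum_mset.add_mset)

lemma sum_mset_mset_set': "finite A \<Longrightarrow> sum_mset (mset_set A) = (\<Sum>A :: nat)"
  using sum_unfold_sum_mset[of "\<lambda>x. x" A] by simp

lemma gg_facts:
  assumes "1 \<le> k" "finite A" "\<forall>x\<in>A. s < x"
  shows "set_mset (gg k (s,A)) = insert s A"
    "smallest_part (gg k (s,A)) = s"
    "count (gg k (s,A)) x = (if x = s then k else 0) + (if x \<in> A then 1 else 0)"
    "num_larger (gg k (s,A)) = card A"
    "sum_mset (gg k (s,A)) = k*s + \<Sum>A"
proof -
  show 1: "set_mset (gg k (s,A)) = insert s A" using assms unfolding gg_def by auto
  show "smallest_part (gg k (s,A)) = s" unfolding smallest_part_def 1
    by (rule Min_eqI) (use assms in auto)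
  then have "filter_mset (\<lambda>x. smallest_part (gg k (s,A)) < x) (gg k (s,A)) = mset_set A"
  proof -
    have r: "filter_mset (\<lambda>x. s < x) (replicate_mset j s) = {#}" for j by (induction j) auto
    have "{x \<in> A. s < x} = A" using assms by auto
    then have "filter_mset (\<lambda>x. s < x) (mset_set A) = mset_set A" by (simp add: filter_mset_mset_set assms)
    with r \<open>smallest_part (gg k (s,A)) = s\<close> show ?thesis unfolding gg_def by simp
  qed
  then show "num_larger (gg k (s,A)) = card A" unfolding num_larger_def by simp
  show "count (gg k (s,A)) x = (if x = s then k else 0) + (if x \<in> A then 1 else 0)"
    using assms unfolding gg_def by simp
  show "sum_mset (gg k (s,A)) = k*s + \<Sum>A"
    using assms unfolding gg_def by (simp add: sum_mset_mset_set')
qed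

lemma JJ_gt: "x \<in> JJ M s \<Longrightarrow> s < x" unfolding JJ_def by auto

lemma DD_elem:
  assumes "d \<in> DD k n"
  shows "1 \<le> fst d" "fst d \<le> n" "snd d \<subseteq> JJ (n+1) (fst d)" "finite (snd d)" "\<forall>x\<in>snd d. fst d < x"
    "k * fst d + \<Sum>(snd d) = n"
proof -
  show "1 \<le> fst d" "fst d \<le> n" "snd d \<subseteq> JJ (n+1) (fst d)" "k * fst d + \<Sum>(snd d) = n"
    using assms unfolding DD_def by auto
  then show "finite (snd d)" "\<forall>x\<in>snd d. fst d < x"
    using finite_subset[OF _ JJ_finite] JJ_gt by blast+
qed

lemma Spt_image:
  assumes "1 \<le> k"
  shows "Spt_do k n = gg k ` DD k n"
proof
  show "gg k ` DD k n \<subseteq> Spt_do k n"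
  proof
    fix p assume "p \<in> gg k ` DD k n"
    then obtain s A where d: "(s,A) \<in> DD k n" and p: "p = gg k (s,A)" by auto
    note e = DD_elem[OF d, simplified]
    note f = gg_facts[OF assms e(4) e(5)]
    have "\<forall>x\<in>#p. 0 < x"
    proof
      fix x assume "x \<in># p"
      then have "x \<in> insert s A" using f(1) p by simp
      then show "0 < x" using e(1) e(5) by auto
    qed
    moreover have "sum_mset p = n" using f(5) e(6) p by simp
    ultimately have "is_partition n p" unfolding is_partition_def by blast
    moreover have "p \<noteq> {#}" using f(1) p by auto
    moreover have "count p (smallest_part p) = k" using p f(2) f(3) e(5) by auto
    moreover have "\<forall>x\<in>#p. smallest_part p < x \<longrightarrow> count p x = 1 \<and> odd (x + smallest_part p)"
    proof (intro ballI impI)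
      fix x assume x: "x \<in># p" "smallest_part p < x"
      then have xA: "x \<in> A" using f(1) f(2) p by auto
      then have "x \<in> JJ (n+1) s" using e(3) by auto
      then have "odd (x + s)" by (simp add: JJ_def)
      moreover have "count p x = 1" using f(2) f(3) p x xA by auto
      ultimately show "count p x = 1 \<and> odd (x + smallest_part p)" using f(2) p by simp
    qed
    ultimately show "p \<in> Spt_do k n" unfolding Spt_do_def by blast
  qed
next
  show "Spt_do k n \<subseteq> gg k ` DD k n"
  proof
    fix p assume "p \<in> Spt_do k n"
    then have part: "is_partition n p" and ne: "p \<noteq> {#}" and cs: "count p (smallest_part p) = k"
      and lg: "\<forall>x\<in>#p. smallest_part p < x \<longrightarrow> count p x = 1 \<and> odd (x + smallest_part p)"
      unfolding Spt_do_def by auto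
    define s where "s = smallest_part p"
    define A where "A = {x \<in> set_mset p. s < x}"
    have fA: "finite A" unfolding A_def by simp
    have sin: "s \<in># p" unfolding s_def smallest_part_def using ne by (simp add: Min_in)
    have sle: "\<And>x. x \<in># p \<Longrightarrow> s \<le> x" unfolding s_def smallest_part_def by simp
    have Ag: "\<forall>x\<in>A. s < x" unfolding A_def by auto
    note f = gg_facts[OF assms fA Ag]
    have peq: "p = gg k (s,A)"
    proof (rule multiset_eqI)
      fix x
      show "count p x = count (gg k (s,A)) x"
      proof (cases "x = s")
        case True then show ?thesis using cs f(3) Ag s_def by auto
      next
        case False
        show ?thesis
        proof (cases "x \<in># p")
          case True
          then have "s < x" using sle[OF True] False by auto
          then show ?thesis using lg True f(3) False A_def s_def by auto
        next
          case nin: False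
          then show ?thesis using f(3) False A_def by (simp add: not_in_iff)
        qed
      qed
    qed
    have s1: "1 \<le> s" using part sin unfolding is_partition_def by auto
    have sumA: "k * s + \<Sum>A = n" using part f(5) peq unfolding is_partition_def by simp
    have "s \<le> n" using sumA assms by (metis le_add1 le_trans mult_le_mono1 mult_1)
    moreover have "A \<subseteq> JJ (n+1) s"
    proof
      fix x assume "x \<in> A"
      then have "x \<in># p" "s < x" unfolding A_def by auto
      then have "x \<le> n" "odd (x + s)" using mset_le_sum[of x p] part lg s_def unfolding is_partition_def by auto
      then show "x \<in> JJ (n+1) s" using \<open>s < x\<close> unfolding JJ_def by auto
    qed
    ultimately have "(s,A) \<in> DD k n" unfolding DD_def using s1 sumA by simp
    then show "p \<in> gg k ` DD k n" using peq by blast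
  qed
qed

lemma gg_inj: "1 \<le> k \<Longrightarrow> inj_on (gg k) (DD k n)"
proof (rule inj_onI)
  fix d e assume k: "1 \<le> k" and d: "d \<in> DD k n" and e: "e \<in> DD k n" and eq: "gg k d = gg k e"
  obtain s A where dd: "d = (s,A)" by (cases d)
  obtain t B where ee: "e = (t,B)" by (cases e)
  note fd = gg_facts[OF k DD_elem(4,5)[OF d, unfolded dd, simplified]]
  note fe = gg_facts[OF k DD_elem(4,5)[OF e, unfolded ee, simplified]]
  have st: "s = t" using fd(2) fe(2) eq dd ee by metis
  have "A = {x \<in> set_mset (gg k (s,A)). s < x}" using fd(1) DD_elem(5)[OF d] dd by auto
  also have "\<dots> = {x \<in> set_mset (gg k (t,B)). t < x}" using eq dd ee st by simp
  also have "\<dots> = B" using fe(1) DD_elem(5)[OF e] ee by auto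
  finally show "d = e" using dd ee st by simp
qed

lemma comb:
  assumes "1 \<le> k" "1 \<le> n"
  shows "sptk'_do k n = SS (n+1) k n $ n"
proof -
  define E where "E = {d \<in> DD k n. even (card (snd d))}"
  define Od where "Od = {d \<in> DD k n. odd (card (snd d))}"
  have nl: "\<And>d. d \<in> DD k n \<Longrightarrow> num_larger (gg k d) = card (snd d)"
    using gg_facts(4)[OF assms(1)] DD_elem(4,5) by (metis prod.collapse)
  have inj: "inj_on (gg k) (DD k n)" using gg_inj[OF assms(1)] .
  have "{p \<in> gg k ` DD k n. even (num_larger p)} = gg k ` {d\<in>DD k n. even (num_larger (gg k d))}" by blast
  moreover have "{d\<in>DD k n. even (num_larger (gg k d))} = E" unfolding E_def using nl by auto
  ultimately have "{p \<in> Spt_do k n. even (num_larger p)} = gg k ` E"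
    unfolding Spt_image[OF assms(1)] by (simp only:)
  then have b0: "B0 k n = card E" unfolding B0_def
    by (simp only:) (rule card_image[OF inj_on_subset[OF inj]], auto simp: E_def)
  have "{p \<in> gg k ` DD k n. odd (num_larger p)} = gg k ` {d\<in>DD k n. odd (num_larger (gg k d))}" by blast
  moreover have "{d\<in>DD k n. odd (num_larger (gg k d))} = Od" unfolding Od_def using nl by auto
  ultimately have "{p \<in> Spt_do k n. odd (num_larger p)} = gg k ` Od"
    unfolding Spt_image[OF assms(1)] by (simp only:)
  then have b1: "B1 k n = card Od" unfolding B1_def
    by (simp only:) (rule card_image[OF inj_on_subset[OF inj]], auto simp: Od_def)
  have fin: "finite E" "finite Od" unfolding E_def Od_def using DD_finite by auto
  have "(\<Sum>d\<in>DD k n. (-1::int) ^ card (snd d)) = (\<Sum>d\<in>E \<union> Od. (-1::int) ^ card (snd d))"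
    unfolding E_def Od_def by (rule sum.cong) auto
  also have "\<dots> = (\<Sum>d\<in>E. (-1::int) ^ card (snd d)) + (\<Sum>d\<in>Od. (-1::int) ^ card (snd d))"
    by (rule sum.union_disjoint) (use fin in \<open>auto simp: E_def Od_def\<close>)
  also have "(\<Sum>d\<in>E. (-1::int) ^ card (snd d)) = int (card E)"
    unfolding E_def by simp
  also have "(\<Sum>d\<in>Od. (-1::int) ^ card (snd d)) = - int (card Od)"
    unfolding Od_def by simp
  finally show ?thesis unfolding sptk'_do_def SS_coef b0 b1 by simp
qed

theorem theorem2:
  fixes k :: nat
  assumes "1 \<le> k"
  shows "Abs_fps (\<lambda>n. if 1 \<le> n then sptk'_do k n else 0)
           = T k * qq2_inf + 2 * fps_X ^ k * q2q2_fin (k - 1)"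
proof (rule fps_ext)
  fix n
  obtain k' where kk: "k = Suc k'" using assms by (cases k) auto
  obtain h where h: "SS (n+1) k n = T k * PP (n+1) 0 + 2 * fps_X^k * q2q2_fin (k-1) + fps_X^(n+1) * h"
    using alg[of n k'] kk by auto
  have "SS (n+1) k n $ n = (T k * qq2_inf + 2 * fps_X ^ k * q2q2_fin (k - 1)) $ n"
  proof -
    have z: "(fps_X^(n+1) * h) $ n = 0" by (simp only: fps_X_power_mult_nth) simp
    show ?thesis unfolding h by (simp only: fps_add_nth z coeff_link)
  qed
  moreover have "n = 0 \<Longrightarrow> SS (n+1) k n = 0" unfolding SS_def by simp
  ultimately show "Abs_fps (\<lambda>n. if 1 \<le> n then sptk'_do k n else 0) $ n
           = (T k * qq2_inf + 2 * fps_X ^ k * q2q2_fin (k - 1)) $ n"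
    using comb[OF assms, of n] by (cases "n = 0") auto
qed

end
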